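(* For every $\zeta=\sum_{j=1}^k x_je_j\in E_k$ and every $t\in\mathbb{C}$ with $t\neq\xi_u$ for all $u=1,\ldots,m$ (where $\xi_u=f_u(\zeta)$), the element $te_1-\zeta$ is invertible in $\mathbb{A}_n^m$ and $$(te_1-\zeta)^{-1}=\sum_{u=1}^m\frac{1}{t-\xi_u}\,I_u+\sum_{s=m+1}^{n}\sum_{r=2}^{s-m+1}\frac{Q_{r,s}}{(t-\xi_{u_s})^r}\,I_s,$$ where the coefficients $Q_{r,s}$ are given recursively by $$Q_{2,s}=T_s,\qquad Q_{r,s}=\sum_{q=r+m-2}^{s-1}Q_{r-1,q}\,B_{q,s},\quad r=3,4,\ldots,s-m+1,$$ with $$T_s:=\sum_{j=2}^k x_j a_{js},\qquad B_{q,s}:=\sum_{p=m+1}^{s-1}T_p\,\Upsilon^{p}_{q,s},$$ and $u_s$ is the index from multiplication rule 3.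
   Context: Fix integers $1\le m\le n$. $\mathbb{A}_n^m$ is an $n$-dimensional commutative associative algebra with unit over $\mathbb{C}$ having a basis $\{I_r\}_{r=1}^n$ with the multiplication rules: (1) for $r,s\in\{1,\ldots,m\}$: $I_rI_s=0$ if $r\ne s$ and $I_rI_r=I_r$; (2) for $r,s\in\{m+1,\ldots,n\}$: $I_rI_s=\sum_{p=\max\{r,s\}+1}^n\Upsilon^s_{r,p}I_p$ with structure constants $\Upsilon^s_{r,p}\in\mathbb{C}$ (so $\Upsilon^{p}_{q,s}$ is the coefficient of $I_s$ in $I_qI_p$); (3) for each $s\in\{m+1,\ldots,n\}$ there is a unique $u_s\in\{1,\ldots,m\}$ such that for all $r\in\{1,\ldots,m\}$: $I_rI_s=I_s$ if $r=u_s$ and $I_rI_s=0$ if $r\ne u_s$. The unit is $1=\sum_{u=1}^mI_u$. For $u=1,\ldots,m$, $f_u:\mathbb{A}_n^m\to\mathbb{C}$ is the linear functional $f_u(\sum_r\lambda_rI_r)=\lambda_u$ (it is continuous and multiplicative). Let $2\le k\le 2n$ and let $e_1=1=\sum_{r=1}^mI_r$, $e_j=\sum_{r=1}^n a_{jr}I_r$ ($a_{jr}\in\mathbb{C}$, $j=2,\ldots,k$) be linearly independent over $\mathbb{R}$. $E_k=\{\zeta=\sum_{j=1}^kx_je_j: x_j\in\mathbb{R}\}$, and $\xi_u:=f_u(\zeta)=x_1+\sum_{j=2}^kx_ja_{ju}$. *)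

theory Defs
  imports Complex_Main
begin

text \<open>Elements of A_n^m are coordinate functions  nat => complex  w.r.t. the basis I_1..I_n;
  coordinates outside 1..n are 0.  Ups q p s is the structure constant Upsilon^p_{q,s}
  (coefficient of I_s in I_q I_p); us s is the index u_s of rule (3).\<close>

definition sc :: "nat \<Rightarrow> nat \<Rightarrow> (nat \<Rightarrow> nat \<Rightarrow> nat \<Rightarrow> complex) \<Rightarrow> (nat \<Rightarrow> nat)
    \<Rightarrow> nat \<Rightarrow> nat \<Rightarrow> nat \<Rightarrow> complex" where
  "sc m n Ups us r s p =
    (if p \<notin> {1..n} then 0
     else if r \<le> m \<and> s \<le> m then (if r = s \<and> p = r then 1 else 0)
     else if m < r \<and> m < s then (if max r s < p then Ups r s p else 0)
     else if r \<le> m then (if r = us s \<and> p = s then 1 else 0)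
     else (if s = us r \<and> p = r then 1 else 0))"

definition amult :: "nat \<Rightarrow> nat \<Rightarrow> (nat \<Rightarrow> nat \<Rightarrow> nat \<Rightarrow> complex) \<Rightarrow> (nat \<Rightarrow> nat)
    \<Rightarrow> (nat \<Rightarrow> complex) \<Rightarrow> (nat \<Rightarrow> complex) \<Rightarrow> (nat \<Rightarrow> complex)" where
  "amult m n Ups us a b =
    (\<lambda>p. \<Sum>r\<in>{1..n}. \<Sum>s\<in>{1..n}. a r * b s * sc m n Ups us r s p)"

definition aone :: "nat \<Rightarrow> nat \<Rightarrow> complex" where
  "aone m = (\<lambda>r. if 1 \<le> r \<and> r \<le> m then 1 else 0)"

definition basisI :: "nat \<Rightarrow> nat \<Rightarrow> complex" where
  "basisI r = (\<lambda>p. if p = r then 1 else 0)"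

definition evec :: "nat \<Rightarrow> nat \<Rightarrow> (nat \<Rightarrow> nat \<Rightarrow> complex) \<Rightarrow> nat \<Rightarrow> nat \<Rightarrow> complex" where
  "evec m n a j = (if j = 1 then aone m else (\<lambda>r. if r \<in> {1..n} then a j r else 0))"

fun Qc :: "(nat \<Rightarrow> complex) \<Rightarrow> (nat \<Rightarrow> nat \<Rightarrow> complex) \<Rightarrow> nat \<Rightarrow> nat \<Rightarrow> nat \<Rightarrow> complex" where
  "Qc T B m 0 s = 0"
| "Qc T B m (Suc 0) s = 0"
| "Qc T B m (Suc (Suc 0)) s = T s"
| "Qc T B m (Suc (Suc (Suc r))) s =
     (\<Sum>q = r + m + 1..s - 1. Qc T B m (Suc (Suc r)) q * B q s)"

end

theory Submission
  imports Defs
begin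


lemma split_1n: "m \<le> n \<Longrightarrow> sum f {1..n} = sum f {1..m} + sum f {m+1..(n::nat)}"
proof -
  assume "m \<le> n"
  then have "{1..n} = {1..m} \<union> {m+1..n}" by auto
  then show ?thesis by (simp add: sum.union_disjoint)
qed

lemma ite_mult1[simp]: "(x::'a::semiring_1) * (if P then 1 else 0) = (if P then x else 0)" by simp
lemma ite_mult1'[simp]: "(if P then 1 else 0) * (x::'a::semiring_1) = (if P then x else 0)" by simp

lemma amult_out: "p \<notin> {1..n} \<Longrightarrow> amult m n Ups us a b p = 0"
  by (simp add: amult_def sc_def)

lemma amult_zero: "amult m n Ups us (\<lambda>_. 0) b = (\<lambda>_. 0)"
  by (simp add: amult_def)

lemma amult_low:
  assumes "p \<in> {1..m}" "m \<le> n"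
  shows "amult m n Ups us a b p = a p * b p"
proof -
  have sc: "sc m n Ups us r s p = (if r = p \<and> s = p then 1 else 0)" if "r \<in> {1..n}" "s \<in> {1..n}" for r s
    using assms that by (auto simp: sc_def)
  have "amult m n Ups us a b p = (\<Sum>r\<in>{1..n}. if r = p then (\<Sum>s\<in>{1..n}. if s = p then a r * b s else 0) else 0)"
    unfolding amult_def by (intro sum.cong refl) (auto simp: sc intro!: sum.cong)
  also have "\<dots> = a p * b p" using assms by simp
  finally show ?thesis .
qed

lemma amult_high:
  assumes p: "p \<in> {m+1..n}" and up: "us p \<in> {1..m}"
  shows "amult m n Ups us a b p = a (us p) * b p + a p * b (us p)
     + (\<Sum>r=m+1..n. \<Sum>s=m+1..n. a r * b s * (if max r s < p then Ups r s p else 0))"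
proof -
  have mn: "m \<le> n" using p by auto
  let ?F = "\<lambda>r s. a r * b s * sc m n Ups us r s p"
  have b11: "(\<Sum>r\<in>{1..m}. \<Sum>s\<in>{1..m}. ?F r s) = 0"
    using p by (intro sum.neutral ballI) (auto simp: sc_def)
  have b12: "(\<Sum>r\<in>{1..m}. \<Sum>s\<in>{m+1..n}. ?F r s) = a (us p) * b p"
  proof -
    have "(\<Sum>r\<in>{1..m}. \<Sum>s\<in>{m+1..n}. ?F r s) = (\<Sum>r\<in>{1..m}. \<Sum>s\<in>{m+1..n}. if s = p then (if r = us p then a r * b s else 0) else 0)"
      using p by (intro sum.cong refl) (auto simp: sc_def)
    also have "\<dots> = a (us p) * b p" using p up by simp
    finally show ?thesis .
  qed
  have b21: "(\<Sum>r\<in>{m+1..n}. \<Sum>s\<in>{1..m}. ?F r s) = a p * b (us p)"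
  proof -
    have "(\<Sum>r\<in>{m+1..n}. \<Sum>s\<in>{1..m}. ?F r s) = (\<Sum>r\<in>{m+1..n}. if r = p then (\<Sum>s\<in>{1..m}. if s = us p then a r * b s else 0) else 0)"
      using p by (intro sum.cong refl) (auto simp: sc_def intro!: sum.cong)
    also have "\<dots> = a p * b (us p)" using p up by simp
    finally show ?thesis .
  qed
  have b22: "(\<Sum>r\<in>{m+1..n}. \<Sum>s\<in>{m+1..n}. ?F r s) = (\<Sum>r=m+1..n. \<Sum>s=m+1..n. a r * b s * (if max r s < p then Ups r s p else 0))"
    using p by (intro sum.cong refl) (auto simp: sc_def)
  have "amult m n Ups us a b p = (\<Sum>r\<in>{1..n}. \<Sum>s\<in>{1..n}. ?F r s)" by (simp add: amult_def)
  also have "\<dots> = (\<Sum>r\<in>{1..n}. (\<Sum>s\<in>{1..m}. ?F r s) + (\<Sum>s\<in>{m+1..n}. ?F r s))"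
    using mn by (intro sum.cong refl split_1n)
  also have "\<dots> = (\<Sum>r\<in>{1..m}. (\<Sum>s\<in>{1..m}. ?F r s) + (\<Sum>s\<in>{m+1..n}. ?F r s))
      + (\<Sum>r\<in>{m+1..n}. (\<Sum>s\<in>{1..m}. ?F r s) + (\<Sum>s\<in>{m+1..n}. ?F r s))"
    using mn by (rule split_1n)
  also have "\<dots> = a (us p) * b p + a p * b (us p)
     + (\<Sum>r=m+1..n. \<Sum>s=m+1..n. a r * b s * (if max r s < p then Ups r s p else 0))"
    unfolding sum.distrib b11 b12 b21 b22 by simp
  finally show ?thesis .
qed

lemma ups_zero:
  assumes us_range: "\<forall>s\<in>{m+1..n}. us s \<in> {1..m}"
    and assoc: "\<forall>a b c. amult m n Ups us (amult m n Ups us a b) c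
                      = amult m n Ups us a (amult m n Ups us b c)"
    and r: "r \<in> {m+1..n}" and s: "s \<in> {m+1..n}" and p: "p \<in> {m+1..n}"
    and lt: "max r s < p" and ne: "us r \<noteq> us p"
  shows "Ups r s p = 0"
proof -
  define u where "u = us p"
  have u: "u \<in> {1..m}" using us_range p u_def by auto
  define X where "X = amult m n Ups us (basisI r) (basisI s)"
  have Xp: "X p = Ups r s p"
  proof -
    have "X p = (\<Sum>r'=m+1..n. \<Sum>s'=m+1..n. basisI r r' * basisI s s' * (if max r' s' < p then Ups r' s' p else 0))"
      unfolding X_def using amult_high[OF p, of us Ups "basisI r" "basisI s"] us_range p lt r
      by (auto simp: basisI_def)
    also have "\<dots> = (\<Sum>r'=m+1..n. if r' = r then (\<Sum>s'=m+1..n. if s' = s then Ups r s p else 0) else 0)"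
      using lt by (intro sum.cong refl) (auto simp: basisI_def max_def intro!: sum.cong)
    also have "\<dots> = Ups r s p" using r s by simp
    finally show ?thesis .
  qed
  have Z: "amult m n Ups us (basisI u) (basisI r) = (\<lambda>_. 0)"
  proof
    fix q
    show "amult m n Ups us (basisI u) (basisI r) q = 0"
    proof (cases "q \<in> {1..n}")
      case False then show ?thesis by (rule amult_out)
    next
      case True
      show ?thesis
      proof (cases "q \<le> m")
        case True
        then show ?thesis using \<open>q \<in> {1..n}\<close> amult_low[of q m n] r u
          by (auto simp: basisI_def)
      next
        case False
        then have q: "q \<in> {m+1..n}" using \<open>q \<in> {1..n}\<close> by auto
        have "amult m n Ups us (basisI u) (basisI r) q = basisI u (us q) * basisI r q + basisI u q * basisI r (us q)
          + (\<Sum>r'=m+1..n. \<Sum>s'=m+1..n. basisI u r' * basisI r s' * (if max r' s' < q then Ups r' s' q else 0))"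
          using amult_high[OF q] us_range q by auto
        also have "\<dots> = 0" using u q ne u_def us_range
          by (auto simp: basisI_def)
        finally show ?thesis .
      qed
    qed
  qed
  have "Ups r s p = amult m n Ups us (basisI u) X p"
  proof -
    have "amult m n Ups us (basisI u) X p = basisI u (us p) * X p + basisI u p * X (us p)
          + (\<Sum>r'=m+1..n. \<Sum>s'=m+1..n. basisI u r' * X s' * (if max r' s' < p then Ups r' s' p else 0))"
      using amult_high[OF p] us_range p by auto
    also have "\<dots> = X p" using u p u_def by (auto simp: basisI_def)
    finally show ?thesis using Xp by simp
  qed
  also have "\<dots> = amult m n Ups us (amult m n Ups us (basisI u) (basisI r)) (basisI s) p"
    using assoc X_def by simp
  also have "\<dots> = 0" unfolding Z amult_zero by simp
  finally show ?thesis .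
qed



lemma exchange:
  fixes G :: "nat \<Rightarrow> nat \<Rightarrow> complex"
  assumes "m < p"
  shows "(\<Sum>r=m+1..p-1. \<Sum>j=2..r-m+1. G j r) = (\<Sum>j=2..p-m. \<Sum>q=j+m-1..p-1. G j q)"
proof -
  have "(\<Sum>r=m+1..p-1. \<Sum>j=2..r-m+1. G j r) = (\<Sum>r\<in>{m+1..p-1}. \<Sum>j\<in>{j. j \<in> {2..p-m} \<and> j \<le> r-m+1}. G j r)"
    using assms by (intro sum.cong refl) auto
  also have "\<dots> = (\<Sum>j\<in>{2..p-m}. \<Sum>r\<in>{r. r \<in> {m+1..p-1} \<and> j \<le> r-m+1}. G j r)"
    by (rule sum.swap_restrict) auto
  also have "\<dots> = (\<Sum>j=2..p-m. \<Sum>q=j+m-1..p-1. G j q)"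
    using assms by (intro sum.cong refl) auto
  finally show ?thesis .
qed

lemma Qc_rec: "3 \<le> j \<Longrightarrow> Qc T B m j s = (\<Sum>q = j + m - 2..s - 1. Qc T B m (j - 1) q * B q s)"
proof -
  assume "3 \<le> j"
  then obtain i where "j = Suc (Suc (Suc i))" using le_Suc_ex[of 3 j] by (auto simp: numeral_3_eq_3)
  then show ?thesis by simp
qed


theorem lemma1:
  fixes m n k :: nat
    and Ups :: "nat \<Rightarrow> nat \<Rightarrow> nat \<Rightarrow> complex"
    and us :: "nat \<Rightarrow> nat"
    and a :: "nat \<Rightarrow> nat \<Rightarrow> complex"
    and x :: "nat \<Rightarrow> real"
    and t :: complex
  assumes mn: "1 \<le> m" "m \<le> n"
    and us_range: "\<forall>s\<in>{m+1..n}. us s \<in> {1..m}"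
    and comm: "\<forall>a b. amult m n Ups us a b = amult m n Ups us b a"
    and assoc: "\<forall>a b c. amult m n Ups us (amult m n Ups us a b) c
                      = amult m n Ups us a (amult m n Ups us b c)"
    and k_bounds: "2 \<le> k" "k \<le> 2 * n"
    and lin_indep: "\<forall>c :: nat \<Rightarrow> real.
        (\<forall>r. (\<Sum>j = 1..k. complex_of_real (c j) * evec m n a j r) = 0)
          \<longrightarrow> (\<forall>j\<in>{1..k}. c j = 0)"
    and t_ne: "\<forall>u\<in>{1..m}. t \<noteq> complex_of_real (x 1) + (\<Sum>j = 2..k. complex_of_real (x j) * a j u)"
  shows
    "let \<zeta> = (\<lambda>r. \<Sum>j = 1..k. complex_of_real (x j) * evec m n a j r);
         \<xi> = (\<lambda>u. complex_of_real (x 1) + (\<Sum>j = 2..k. complex_of_real (x j) * a j u));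
         T = (\<lambda>s. \<Sum>j = 2..k. complex_of_real (x j) * a j s);
         B = (\<lambda>q s. \<Sum>p = m + 1..s - 1. T p * Ups q p s);
         w = (\<lambda>r. t * evec m n a 1 r - \<zeta> r);
         R = (\<lambda>p. (\<Sum>u = 1..m. 1 / (t - \<xi> u) * basisI u p)
           + (\<Sum>s = m + 1..n. \<Sum>r = 2..s - m + 1.
                Qc T B m r s / (t - \<xi> (us s)) ^ r * basisI s p))
     in (\<exists>y. amult m n Ups us w y = aone m \<and> amult m n Ups us y w = aone m)
        \<and> amult m n Ups us w R = aone m \<and> amult m n Ups us R w = aone m"
proof -
  define \<zeta> where "\<zeta> = (\<lambda>r. \<Sum>j = 1..k. complex_of_real (x j) * evec m n a j r)"
  define \<xi> where "\<xi> = (\<lambda>u. complex_of_real (x 1) + (\<Sum>j = 2..k. complex_of_real (x j) * a j u))"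
  define T where "T = (\<lambda>s. \<Sum>j = 2..k. complex_of_real (x j) * a j s)"
  define B where "B = (\<lambda>q s. \<Sum>p = m + 1..s - 1. T p * Ups q p s)"
  define w where "w = (\<lambda>r. t * evec m n a 1 r - \<zeta> r)"
  define R where "R = (\<lambda>p. (\<Sum>u = 1..m. 1 / (t - \<xi> u) * basisI u p)
           + (\<Sum>s = m + 1..n. \<Sum>r = 2..s - m + 1.
                Qc T B m r s / (t - \<xi> (us s)) ^ r * basisI s p))"
  have xiT: "\<xi> u = complex_of_real (x 1) + T u" for u by (simp add: \<xi>_def T_def)
  have ne: "t - \<xi> u \<noteq> 0" if "u \<in> {1..m}" for u using t_ne that by (simp add: \<xi>_def)
  have zeta: "\<zeta> p = complex_of_real (x 1) * aone m p + T p" if "p \<in> {1..n}" for p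
  proof -
    have "\<zeta> p = complex_of_real (x 1) * evec m n a 1 p + (\<Sum>j = Suc 1..k. complex_of_real (x j) * evec m n a j p)"
      unfolding \<zeta>_def using k_bounds by (subst sum.atLeast_Suc_atMost) auto
    also have "(\<Sum>j = Suc 1..k. complex_of_real (x j) * evec m n a j p) = T p"
      unfolding T_def using that by (intro sum.cong) (auto simp: evec_def)
    finally show ?thesis by (simp add: evec_def)
  qed
  have wlow: "w p = t - \<xi> p" if "p \<in> {1..m}" for p
    using zeta[of p] that mn by (auto simp: w_def evec_def aone_def xiT)
  have whigh: "w p = - T p" if "p \<in> {m+1..n}" for p
    using zeta[of p] that mn by (auto simp: w_def evec_def aone_def)
  have Rlow: "R u = 1 / (t - \<xi> u)" if "u \<in> {1..m}" for u
  proof -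
    have "(\<Sum>s = m + 1..n. \<Sum>r = 2..s - m + 1. Qc T B m r s / (t - \<xi> (us s)) ^ r * basisI s u) = 0"
      using that by (intro sum.neutral ballI) (auto simp: basisI_def)
    moreover have "(\<Sum>u' = 1..m. 1 / (t - \<xi> u') * basisI u' u) = (\<Sum>u' = 1..m. if u' = u then 1 / (t - \<xi> u') else 0)"
      by (intro sum.cong refl) (simp add: basisI_def)
    moreover have "(\<Sum>u' = 1..m. if u' = u then 1 / (t - \<xi> u') else 0) = 1 / (t - \<xi> u)"
      using that by simp
    ultimately show ?thesis by (simp add: R_def)
  qed
  have Rhigh: "R p = (\<Sum>r = 2..p - m + 1. Qc T B m r p / (t - \<xi> (us p)) ^ r)" if "p \<in> {m+1..n}" for p
  proof -
    have "(\<Sum>u' = 1..m. 1 / (t - \<xi> u') * basisI u' p) = 0"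
      using that by (intro sum.neutral ballI) (auto simp: basisI_def)
    moreover have "(\<Sum>s = m + 1..n. \<Sum>r = 2..s - m + 1. Qc T B m r s / (t - \<xi> (us s)) ^ r * basisI s p)
        = (\<Sum>s = m + 1..n. if s = p then (\<Sum>r = 2..s - m + 1. Qc T B m r s / (t - \<xi> (us s)) ^ r) else 0)"
      by (intro sum.cong refl) (auto simp: basisI_def)
    ultimately show ?thesis using that by (simp add: R_def)
  qed
  have main: "amult m n Ups us R w = aone m"
  proof
    fix p
    show "amult m n Ups us R w p = aone m p"
    proof (cases "p \<in> {1..n}")
      case False
      then show ?thesis using mn by (auto simp: amult_out aone_def)
    next
      case pin: True
      show ?thesis
      proof (cases "p \<le> m")
        case True
        then have p: "p \<in> {1..m}" using pin by auto
        show ?thesis using amult_low[OF p mn(2)] Rlow[OF p] wlow[OF p] ne[OF p] p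
          by (simp add: aone_def)
      next
        case False
        then have p: "p \<in> {m+1..n}" using pin by auto
        have up: "us p \<in> {1..m}" using us_range p by auto
        define L where "L = t - \<xi> (us p)"
        have L0: "L \<noteq> 0" using ne[OF up] L_def by simp
        define G where "G = (\<lambda>j q. Qc T B m j q * B q p / L ^ j)"
        have S: "(\<Sum>r=m+1..n. \<Sum>s=m+1..n. R r * w s * (if max r s < p then Ups r s p else 0))
            = - (\<Sum>r=m+1..p-1. \<Sum>j=2..r-m+1. G j r)"
        proof -
          have "(\<Sum>r=m+1..n. \<Sum>s=m+1..n. R r * w s * (if max r s < p then Ups r s p else 0))
              = (\<Sum>r\<in>{m+1..n}. if r < p then - (R r * B r p) else 0)"
          proof (intro sum.cong refl)
            fix r assume r: "r \<in> {m+1..n}"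
            have "(\<Sum>s=m+1..n. R r * w s * (if max r s < p then Ups r s p else 0))
                = (\<Sum>s\<in>{m+1..n}. if s < p then (if r < p then - (R r * (T s * Ups r s p)) else 0) else 0)"
              by (intro sum.cong refl) (auto simp: whigh)
            also have "\<dots> = (\<Sum>s\<in>{s\<in>{m+1..n}. s < p}. if r < p then - (R r * (T s * Ups r s p)) else 0)"
              by (simp only: sum.inter_filter[OF finite_atLeastAtMost])
            also have "{s\<in>{m+1..n}. s < p} = {m+1..p-1}" using p by auto
            also have "(\<Sum>s\<in>{m+1..p-1}. if r < p then - (R r * (T s * Ups r s p)) else 0)
                = (if r < p then - (R r * B r p) else 0)"
              by (auto simp: B_def sum_negf sum_distrib_left)
            finally show "(\<Sum>s=m+1..n. R r * w s * (if max r s < p then Ups r s p else 0))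
                = (if r < p then - (R r * B r p) else 0)" .
          qed
          also have "\<dots> = (\<Sum>r\<in>{r\<in>{m+1..n}. r < p}. - (R r * B r p))"
            by (simp only: sum.inter_filter[OF finite_atLeastAtMost])
          also have "{r\<in>{m+1..n}. r < p} = {m+1..p-1}" using p by auto
          also have "(\<Sum>r\<in>{m+1..p-1}. - (R r * B r p)) = - (\<Sum>r=m+1..p-1. \<Sum>j=2..r-m+1. G j r)"
          proof -
            have "R r * B r p = (\<Sum>j=2..r-m+1. G j r)" if r: "r \<in> {m+1..p-1}" for r
            proof (cases "us r = us p")
              case True
              have rr: "r \<in> {m+1..n}" using r p by auto
              show ?thesis unfolding Rhigh[OF rr] G_def L_def True sum_distrib_right
                by (intro sum.cong refl) simp
            next
              case False
              have U: "Ups r s p = 0" if s: "s \<in> {m+1..p-1}" for s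
                using r p s False by (intro ups_zero[OF us_range assoc]) auto
              have "B r p = 0" unfolding B_def
                using U by (intro sum.neutral ballI) auto
              moreover have "(\<Sum>j=2..r-m+1. G j r) = 0" unfolding G_def using \<open>B r p = 0\<close> by simp
              ultimately show ?thesis by simp
            qed
            then have E: "(\<Sum>r\<in>{m+1..p-1}. R r * B r p) = (\<Sum>r=m+1..p-1. \<Sum>j=2..r-m+1. G j r)"
              by (intro sum.cong refl)
            show ?thesis by (simp only: sum_negf E)
          qed
          finally show ?thesis .
        qed
        have RL: "R p * L = T p / L + (\<Sum>j=2..p-m. \<Sum>q=j+m-1..p-1. G j q)"
        proof -
          have "R p * L = (\<Sum>r = 2..p - m + 1. Qc T B m r p / L ^ r * L)"
            unfolding Rhigh[OF p] L_def sum_distrib_right by (rule refl)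
          also have "\<dots> = Qc T B m 2 p / L ^ 2 * L + (\<Sum>r = Suc 2..Suc (p - m). Qc T B m r p / L ^ r * L)"
            using p by (subst sum.atLeast_Suc_atMost) auto
          also have "(\<Sum>r = Suc 2..Suc (p - m). Qc T B m r p / L ^ r * L)
              = (\<Sum>j = 2..p - m. Qc T B m (Suc j) p / L ^ Suc j * L)"
            by (rule sum.shift_bounds_cl_Suc_ivl)
          also have "\<dots> = (\<Sum>j=2..p-m. \<Sum>q=j+m-1..p-1. G j q)"
          proof (intro sum.cong refl)
            fix j assume j: "j \<in> {2..p-m}"
            have "Qc T B m (Suc j) p = (\<Sum>q = Suc j + m - 2..p - 1. Qc T B m (Suc j - 1) q * B q p)"
              using j by (intro Qc_rec) auto
            also have "\<dots> = (\<Sum>q = j + m - 1..p - 1. Qc T B m j q * B q p)"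
              using j by (intro sum.cong) auto
            moreover have "Qc T B m (Suc j) p / L ^ Suc j * L = Qc T B m (Suc j) p / L ^ j"
              using L0 by simp
            ultimately show "Qc T B m (Suc j) p / L ^ Suc j * L = (\<Sum>q=j+m-1..p-1. G j q)"
              by (simp only: G_def sum_divide_distrib)
          qed
          also have "Qc T B m 2 p / L ^ 2 * L = T p / L"
            using L0 by (simp add: numeral_2_eq_2 power2_eq_square)
          finally show ?thesis .
        qed
        have "amult m n Ups us R w p = R (us p) * w p + R p * w (us p)
            + (\<Sum>r=m+1..n. \<Sum>s=m+1..n. R r * w s * (if max r s < p then Ups r s p else 0))"
          by (rule amult_high[where us=us, OF p up])
        also have "\<dots> = - (T p / L) + R p * L - (\<Sum>r=m+1..p-1. \<Sum>j=2..r-m+1. G j r)"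
          unfolding S using Rlow[OF up] wlow[OF up] whigh[OF p] L_def by simp
        also have "\<dots> = 0"
        proof -
          have mp: "m < p" using p by auto
          show ?thesis unfolding RL exchange[OF mp, of G] by simp
        qed
        finally show ?thesis using p by (simp add: aone_def)
      qed
    qed
  qed
  have main2: "amult m n Ups us w R = aone m" using comm main by metis
  show ?thesis unfolding Let_def
    using main main2 unfolding R_def w_def B_def T_def \<xi>_def \<zeta>_def by blast
qed

end
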